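(* On the Lie algebra $\mathfrak{r}_2\mathfrak{r}_2$ with basis $e_1,\dots,e_4$, non-zero brackets $[e_1,e_2]=e_2$, $[e_3,e_4]=e_4$, and orientation $\mu=e^{1234}$, define $J$ by $Je_1=\tfrac{1}{\sqrt2}(e_2-e_4)$, $Je_2=\tfrac{1}{\sqrt2}(-e_1-e_3)$, $Je_3=\tfrac{1}{\sqrt2}(e_2+e_4)$, $Je_4=\tfrac{1}{\sqrt2}(e_1-e_3)$. Then $J$ is an almost complex structure inducing the orientation $\mu$, $J$ is tamed by the symplectic form $e^{12}+e^{34}$, and $J$ is not compatible with any symplectic form on $\mathfrak{r}_2\mathfrak{r}_2$. *)

theory Defs
  imports "HOL-Analysis.Analysis" "HOL-Library.Numeral_Type"
begin

text \<open>The Lie algebra r2r2 is modelled on real^4; the basis vector e_i is axis i 1,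
  and the coordinate of x along e_i is x$i (i = 1,2,3,4 are the four distinct
  elements of the index type 4).\<close>

definition ebas :: "4 \<Rightarrow> real^4" where
  "ebas i = axis i 1"

definition r2r2_bracket :: "real^4 \<Rightarrow> real^4 \<Rightarrow> real^4" where
  "r2r2_bracket x y = (x$1 * y$2 - x$2 * y$1) *\<^sub>R ebas 2 + (x$3 * y$4 - x$4 * y$3) *\<^sub>R ebas 4"

definition mu1234 :: "real^4 \<Rightarrow> real^4 \<Rightarrow> real^4 \<Rightarrow> real^4 \<Rightarrow> real" where
  "mu1234 a b c d = det ((\<chi> i. if i = 1 then a else if i = 2 then b else if i = 3 then c else d) :: real^4^4)"

definition omega0 :: "real^4 \<Rightarrow> real^4 \<Rightarrow> real" where
  "omega0 x y = x$1 * y$2 - x$2 * y$1 + x$3 * y$4 - x$4 * y$3"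

definition Jmap :: "real^4 \<Rightarrow> real^4" where
  "Jmap x =
     x$1 *\<^sub>R ((1 / sqrt 2) *\<^sub>R (ebas 2 - ebas 4))
   + x$2 *\<^sub>R ((1 / sqrt 2) *\<^sub>R (- ebas 1 - ebas 3))
   + x$3 *\<^sub>R ((1 / sqrt 2) *\<^sub>R (ebas 2 + ebas 4))
   + x$4 *\<^sub>R ((1 / sqrt 2) *\<^sub>R (ebas 1 - ebas 3))"

definition almost_complex :: "('a::real_vector \<Rightarrow> 'a) \<Rightarrow> bool" where
  "almost_complex J \<longleftrightarrow> linear J \<and> (\<forall>x. J (J x) = - x)"

text \<open>J (on a 4-dimensional space) induces the orientation of the volume form mu:
  every complex basis (v, Jv, w, Jw) is positively oriented with respect to mu.\<close>
definition induces_orientation :: "(real^4 \<Rightarrow> real^4) \<Rightarrow> (real^4 \<Rightarrow> real^4 \<Rightarrow> real^4 \<Rightarrow> real^4 \<Rightarrow> real) \<Rightarrow> bool" where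
  "induces_orientation J mu \<longleftrightarrow>
     (\<forall>v w. mu v (J v) w (J w) \<noteq> 0 \<longrightarrow> mu v (J v) w (J w) > 0)"

text \<open>Symplectic form on a Lie algebra with bracket br: skew-symmetric bilinear,
  nondegenerate, and closed for the Chevalley-Eilenberg differential.\<close>
definition symplectic_form :: "('a::real_vector \<Rightarrow> 'a \<Rightarrow> 'a) \<Rightarrow> ('a \<Rightarrow> 'a \<Rightarrow> real) \<Rightarrow> bool" where
  "symplectic_form br \<omega> \<longleftrightarrow>
     bilinear \<omega> \<and> (\<forall>x y. \<omega> x y = - \<omega> y x) \<and>
     (\<forall>x. x \<noteq> 0 \<longrightarrow> (\<exists>y. \<omega> x y \<noteq> 0)) \<and>
     (\<forall>x y z. \<omega> (br x y) z + \<omega> (br y z) x + \<omega> (br z x) y = 0)"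

definition tames :: "('a::real_vector \<Rightarrow> 'a \<Rightarrow> real) \<Rightarrow> ('a \<Rightarrow> 'a) \<Rightarrow> bool" where
  "tames \<omega> J \<longleftrightarrow> (\<forall>x. x \<noteq> 0 \<longrightarrow> \<omega> x (J x) > 0)"

definition compatible :: "('a::real_vector \<Rightarrow> 'a \<Rightarrow> real) \<Rightarrow> ('a \<Rightarrow> 'a) \<Rightarrow> bool" where
  "compatible \<omega> J \<longleftrightarrow> tames \<omega> J \<and> (\<forall>x y. \<omega> (J x) (J y) = \<omega> x y)"

end

theory Submission imports Defs begin
lemma "(1::4) \<noteq> 2 \<and> (1::4) \<noteq> 3 \<and> (1::4)\<noteq>4 \<and> (2::4)\<noteq>3 \<and> (2::4)\<noteq>4 \<and> (3::4)\<noteq>4" by simp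
lemma det_4:
  "det (A::'a::comm_ring_1^4^4) = 
    A$1$1 * (A$2$2 * A$3$3 * A$4$4 + A$2$3 * A$3$4 * A$4$2 + A$2$4 * A$3$2 * A$4$3
             - A$2$2 * A$3$4 * A$4$3 - A$2$3 * A$3$2 * A$4$4 - A$2$4 * A$3$3 * A$4$2)
  - A$1$2 * (A$2$1 * A$3$3 * A$4$4 + A$2$3 * A$3$4 * A$4$1 + A$2$4 * A$3$1 * A$4$3
             - A$2$1 * A$3$4 * A$4$3 - A$2$3 * A$3$1 * A$4$4 - A$2$4 * A$3$3 * A$4$1)
  + A$1$3 * (A$2$1 * A$3$2 * A$4$4 + A$2$2 * A$3$4 * A$4$1 + A$2$4 * A$3$1 * A$4$2
             - A$2$1 * A$3$4 * A$4$2 - A$2$2 * A$3$1 * A$4$4 - A$2$4 * A$3$2 * A$4$1)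
  - A$1$4 * (A$2$1 * A$3$2 * A$4$3 + A$2$2 * A$3$3 * A$4$1 + A$2$3 * A$3$1 * A$4$2
             - A$2$1 * A$3$3 * A$4$2 - A$2$2 * A$3$1 * A$4$3 - A$2$3 * A$3$2 * A$4$1)"
proof -
  have f1: "finite {2::4, 3, 4}" "1 \<notin> {2::4, 3, 4}" by auto
  have f2: "finite {3::4, 4}" "2 \<notin> {3::4, 4}" by auto
  have f3: "finite {4::4}" "3 \<notin> {4::4}" by auto
  show ?thesis
    unfolding det_def UNIV_4
    unfolding sum_over_permutations_insert[OF f1]
    unfolding sum_over_permutations_insert[OF f2]
    unfolding sum_over_permutations_insert[OF f3]
    unfolding permutes_sing
    by (simp add: sign_swap_id permutation_swap_id sign_compose permutation_compose sign_id swap_id_eq algebra_simps)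
qed

lemma ebas_nth[simp]: "ebas i $ j = (if j = i then 1 else 0)"
  by (simp add: ebas_def axis_def)

definition kk :: real where "kk = 1 / sqrt 2"

lemma kk2: "kk * kk = 1/2"
  by (simp add: kk_def)

lemma kk_pos: "kk > 0" by (simp add: kk_def)

lemma J1: "Jmap x $ 1 = kk * (x$4 - x$2)"
  and J2: "Jmap x $ 2 = kk * (x$1 + x$3)"
  and J3: "Jmap x $ 3 = kk * (- x$2 - x$4)"
  and J4: "Jmap x $ 4 = kk * (x$3 - x$1)"
  by (simp_all add: Jmap_def kk_def field_simps)

lemmas Jc = J1 J2 J3 J4

lemma vec4_eq: "(x::real^4) = y \<longleftrightarrow> x$1 = y$1 \<and> x$2 = y$2 \<and> x$3 = y$3 \<and> x$4 = y$4"
  by (simp add: vec_eq_iff forall_4)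

lemma almost: "almost_complex Jmap"
  unfolding almost_complex_def
proof
  show "linear Jmap"
    by (rule linearI) (simp_all add: vec4_eq Jc algebra_simps)
  show "\<forall>x. Jmap (Jmap x) = - x"
  proof
    fix x
    show "Jmap (Jmap x) = - x"
      unfolding vec4_eq Jc using kk2 by simp algebra
  qed
qed

lemma tame0: "x \<noteq> 0 \<Longrightarrow> omega0 x (Jmap x) > 0"
proof -
  assume "x \<noteq> 0"
  then have "x$1 \<noteq> 0 \<or> x$2 \<noteq> 0 \<or> x$3 \<noteq> 0 \<or> x$4 \<noteq> 0" by (auto simp: vec4_eq)
  then have pos: "(x$1)^2 + (x$2)^2 + (x$3)^2 + (x$4)^2 > 0"
    by (smt (verit) power2_less_0 zero_less_power2)
  have "omega0 x (Jmap x) = kk * ((x$1)^2 + (x$2)^2 + (x$3)^2 + (x$4)^2)"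
    unfolding omega0_def Jc by algebra
  then show ?thesis using pos kk_pos by simp
qed

lemma Dpoly:
  fixes v w :: "real^4"
  shows "mu1234 v (\<chi> i. if i = 1 then v$4 - v$2 else if i = 2 then v$1 + v$3 else if i = 3 then - v$2 - v$4 else v$3 - v$1)
     w (\<chi> i. if i = 1 then w$4 - w$2 else if i = 2 then w$1 + w$3 else if i = 3 then - w$2 - w$4 else w$3 - w$1)
   * 2 = (2 * (v$1) * (w$3) - (v$2-v$4)*(w$2+w$4) - 2 * (v$3) * (w$1) + (v$2+v$4)*(w$2-w$4))^2
     + 2 * (v$1*(w$2+w$4) + (v$2-v$4)*w$3 - v$3*(w$2-w$4) - (v$2+v$4)*w$1)^2"
  unfolding mu1234_def det_4
  by (simp add: power2_eq_square algebra_simps)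

lemma orient: "induces_orientation Jmap mu1234"
  unfolding induces_orientation_def
proof (intro allI impI)
  fix v w :: "real^4"
  define J' :: "real^4 \<Rightarrow> real^4" where "J' x = (\<chi> i. if i = 1 then x$4 - x$2 else if i = 2 then x$1 + x$3 else if i = 3 then - x$2 - x$4 else x$3 - x$1)" for x
  have JJ: "Jmap x = kk *\<^sub>R J' x" for x
    by (simp add: vec4_eq Jc J'_def)
  have sc: "mu1234 a (c *\<^sub>R b) d (c *\<^sub>R e) = c * c * mu1234 a b d e" for a b d e :: "real^4" and c
    unfolding mu1234_def det_4 by (simp add: algebra_simps)
  have D: "mu1234 v (J' v) w (J' w) * 2 \<ge> 0"
    unfolding J'_def Dpoly by simp
  have "mu1234 v (Jmap v) w (Jmap w) = mu1234 v (J' v) w (J' w) / 2"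
    unfolding JJ sc kk2 by simp
  moreover assume "mu1234 v (Jmap v) w (Jmap w) \<noteq> 0"
  ultimately show "mu1234 v (Jmap v) w (Jmap w) > 0"
    using D by linarith
qed

lemma decomp: "(x::real^4) = x$1 *\<^sub>R ebas 1 + x$2 *\<^sub>R ebas 2 + x$3 *\<^sub>R ebas 3 + x$4 *\<^sub>R ebas 4"
  by (simp add: vec4_eq)

lemma bil_exp:
  assumes b: "bilinear \<omega>"
  shows "\<omega> x y = (\<Sum>i\<in>UNIV. \<Sum>j\<in>UNIV. x$i * y$j * \<omega> (ebas i) (ebas j))"
proof -
  have "\<omega> x y = \<omega> (x$1 *\<^sub>R ebas 1 + x$2 *\<^sub>R ebas 2 + x$3 *\<^sub>R ebas 3 + x$4 *\<^sub>R ebas 4)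
      (y$1 *\<^sub>R ebas 1 + y$2 *\<^sub>R ebas 2 + y$3 *\<^sub>R ebas 3 + y$4 *\<^sub>R ebas 4)"
    using decomp[of x] decomp[of y] by simp
  also have "\<dots> = (\<Sum>i\<in>UNIV. \<Sum>j\<in>UNIV. x$i * y$j * \<omega> (ebas i) (ebas j))"
    by (simp add: bilinear_ladd[OF b] bilinear_radd[OF b] bilinear_lmul[OF b] bilinear_rmul[OF b] sum_4 algebra_simps)
  finally show ?thesis .
qed

lemma omega0_bil: "bilinear omega0"
  unfolding bilinear_def
  by (auto intro!: linearI simp: omega0_def algebra_simps)

lemma omega0_sympl: "symplectic_form r2r2_bracket omega0"
  unfolding symplectic_form_def
proof (intro conjI allI impI)
  show "bilinear omega0" by (rule omega0_bil)
  show "omega0 x y = - omega0 y x" for x y by (simp add: omega0_def)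
  show "\<exists>y. omega0 x y \<noteq> 0" if "x \<noteq> 0" for x
    using tame0[OF that] by (intro exI[of _ "Jmap x"]) simp
  show "omega0 (r2r2_bracket x y) z + omega0 (r2r2_bracket y z) x + omega0 (r2r2_bracket z x) y = 0" for x y z
    by (simp add: omega0_def r2r2_bracket_def algebra_simps)
qed

lemma no_compat: "\<not> (\<exists>\<omega>. symplectic_form r2r2_bracket \<omega> \<and> compatible \<omega> Jmap)"
proof
  assume "\<exists>\<omega>. symplectic_form r2r2_bracket \<omega> \<and> compatible \<omega> Jmap"
  then obtain \<omega> where s: "symplectic_form r2r2_bracket \<omega>" and c: "compatible \<omega> Jmap" by blast
  have b: "bilinear \<omega>" and sk: "\<And>x y. \<omega> x y = - \<omega> y x"
    and cl: "\<And>x y z. \<omega> (r2r2_bracket x y) z + \<omega> (r2r2_bracket y z) x + \<omega> (r2r2_bracket z x) y = 0"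
    using s unfolding symplectic_form_def by blast+
  have t: "\<And>x. x \<noteq> 0 \<Longrightarrow> \<omega> x (Jmap x) > 0" and inv: "\<And>x y. \<omega> (Jmap x) (Jmap y) = \<omega> x y"
    using c unfolding compatible_def tames_def by blast+
  define a where "a i j = \<omega> (ebas i) (ebas j)" for i j
  have E: "\<omega> x y = (\<Sum>i\<in>UNIV. \<Sum>j\<in>UNIV. x$i * y$j * a i j)" for x y
    unfolding a_def by (rule bil_exp[OF b])
  have sk': "a i j = - a j i" for i j unfolding a_def by (rule sk)
  have a11: "a i i = 0" for i using sk'[of i i] by simp
  have a14: "a 1 4 = 0"
    using cl[of "ebas 1" "ebas 3" "ebas 4"] sk'[of 1 4] unfolding E
    by (simp add: r2r2_bracket_def sum_4 a11)
  have a23: "a 2 3 = 0"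
    using cl[of "ebas 1" "ebas 2" "ebas 3"] sk'[of 2 3] unfolding E
    by (simp add: r2r2_bracket_def sum_4 a11)
  have i12: "kk * kk * (a 4 1 + a 4 3 - a 2 1 - a 2 3) = a 1 2"
    using inv[of "ebas 1" "ebas 2"] unfolding E
    by (simp add: Jc sum_4 a11 algebra_simps)
  have t1: "kk * (a 1 2 - a 1 4) > 0"
    using t[of "ebas 1"] unfolding E
    by (simp add: Jc sum_4 a11 algebra_simps vec4_eq)
  have t3: "kk * (a 3 2 + a 3 4) > 0"
    using t[of "ebas 3"] unfolding E
    by (simp add: Jc sum_4 a11 algebra_simps vec4_eq)
  have z1: "a 4 1 = 0" "a 3 2 = 0" "a 2 3 = 0" using a14 a23 sk'[of 4 1] sk'[of 3 2] by simp_all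
  have z2: "a 4 3 = - a 3 4" "a 2 1 = - a 1 2" using sk'[of 4 3] sk'[of 2 1] by simp_all
  have "(a 1 2 - a 3 4) / 2 = a 1 2" using i12 unfolding z1 z2 kk2 by simp
  then have e: "a 3 4 = - a 1 2" by simp
  have p1: "a 1 2 > 0" using t1 a14 kk_pos by (simp add: zero_less_mult_iff)
  have p3: "a 3 4 > 0" using t3 z1 kk_pos by (simp add: zero_less_mult_iff)
  show False using e p1 p3 by simp
qed

theorem mainTheorem3:
  shows "almost_complex Jmap
    \<and> induces_orientation Jmap mu1234
    \<and> symplectic_form r2r2_bracket omega0
    \<and> tames omega0 Jmap
    \<and> \<not> (\<exists>\<omega>. symplectic_form r2r2_bracket \<omega> \<and> compatible \<omega> Jmap)"
  using almost orient omega0_sympl tame0 no_compat unfolding tames_def by blast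

end
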